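(* Consider the infinite grid graph $G=P\times P$, where $P$ is the infinite path with vertex set $\mathbb{Z}$ and edges $\{i,i+1\}$, and let $d(u,v)$ denote the length of a shortest path between nodes $u,v$ of $G$. Let $M$ be a finite nonempty set of nodes (the meeting nodes). For a configuration at time $t$, let $\lambda_t(v)\in\mathbb{N}$ be the number of robots at node $v$ (finitely many robots in total), let $c_t(m)=\sum_{v} d(v,m)\,\lambda_t(v)$, and let $W(t)=\{m\in M : c_t(m)=\min_{m'\in M}c_t(m')\}$ be the set of Weber nodes at time $t$. Let $m\in W(t)$. Suppose the configuration at time $t'$ is obtained from that at time $t$ by moving either a single robot, or $j\ge 2$ robots located together on the same node, from a node $a$ to an adjacent node $b$ with $d(b,m)=d(a,m)-1$ (i.e. along a shortest path towards $m$). Then (1) $m\in W(t')$, and (2) $W(t')\subseteq W(t)$.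
   Context: Robots are located on nodes of the grid; several robots may occupy the same node (a multiplicity). The consistency $c_t(m)$ is the sum of the distances of all robots from $m$, counted with multiplicity. *)

theory Defs
  imports Main
begin

type_synonym node = "int \<times> int"

definition grid_adj :: "node \<Rightarrow> node \<Rightarrow> bool" where
  "grid_adj u v \<longleftrightarrow>
     (snd u = snd v \<and> \<bar>fst u - fst v\<bar> = 1) \<or> (fst u = fst v \<and> \<bar>snd u - snd v\<bar> = 1)"

inductive walk :: "node \<Rightarrow> node \<Rightarrow> nat \<Rightarrow> bool" where
  walk_refl: "walk u u 0"
| walk_step: "grid_adj u w \<Longrightarrow> walk w v n \<Longrightarrow> walk u v (Suc n)"

definition gdist :: "node \<Rightarrow> node \<Rightarrow> nat" where
  "gdist u v = (LEAST n. walk u v n)"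

definition finite_config :: "(node \<Rightarrow> nat) \<Rightarrow> bool" where
  "finite_config lam \<longleftrightarrow> finite {v. lam v \<noteq> 0}"

definition consistency :: "(node \<Rightarrow> nat) \<Rightarrow> node \<Rightarrow> nat" where
  "consistency lam m = (\<Sum>v\<in>{v. lam v \<noteq> 0}. gdist v m * lam v)"

definition weber :: "(node \<Rightarrow> nat) \<Rightarrow> node set \<Rightarrow> node set" where
  "weber lam M = {m \<in> M. consistency lam m = Min (consistency lam ` M)}"

end

theory Submission
  imports Defs
begin

lemma walk_trans: "walk u w n \<Longrightarrow> walk w v k \<Longrightarrow> walk u v (n + k)"
  by (induction rule: walk.induct) (auto intro: walk.intros)

lemma walk_x1: "walk (x, y) (x + int n, y) n"
proof (induction n arbitrary: x)
  case 0 then show ?case by (simp add: walk_refl)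
next
  case (Suc n)
  have "grid_adj (x, y) (x + 1, y)" by (simp add: grid_adj_def)
  moreover have "walk (x + 1, y) (x + 1 + int n, y) n" by (rule Suc.IH)
  ultimately show ?case using walk_step by (simp add: add.assoc)
qed

lemma walk_x2: "walk (x + int n, y) (x, y) n"
proof (induction n arbitrary: x)
  case 0 then show ?case by (simp add: walk_refl)
next
  case (Suc n)
  have "grid_adj (x + 1 + int n, y) (x + int n, y)" by (simp add: grid_adj_def)
  moreover have "walk (x + int n, y) (x, y) n" by (rule Suc.IH)
  ultimately have "walk (x + 1 + int n, y) (x, y) (Suc n)" using walk_step by blast
  then show ?case by (simp add: add.commute add.left_commute)
qed

lemma walk_y1: "walk (x, y) (x, y + int n) n"
proof (induction n arbitrary: y)
  case 0 then show ?case by (simp add: walk_refl)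
next
  case (Suc n)
  have "grid_adj (x, y) (x, y + 1)" by (simp add: grid_adj_def)
  moreover have "walk (x, y + 1) (x, y + 1 + int n) n" by (rule Suc.IH)
  ultimately show ?case using walk_step by (simp add: add.assoc)
qed

lemma walk_y2: "walk (x, y + int n) (x, y) n"
proof (induction n arbitrary: y)
  case 0 then show ?case by (simp add: walk_refl)
next
  case (Suc n)
  have "grid_adj (x, y + 1 + int n) (x, y + int n)" by (simp add: grid_adj_def)
  moreover have "walk (x, y + int n) (x, y) n" by (rule Suc.IH)
  ultimately have "walk (x, y + 1 + int n) (x, y) (Suc n)" using walk_step by blast
  then show ?case by (simp add: add.commute add.left_commute)
qed

lemma walk_hx: "\<exists>n. walk (x, y) (x', y) n"
proof (cases "x \<le> x'")
  case True
  then have "x' = x + int (nat (x' - x))" by simp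
  then show ?thesis using walk_x1[of x y "nat (x' - x)"] by metis
next
  case False
  then have "x = x' + int (nat (x - x'))" by simp
  then show ?thesis using walk_x2[of x' "nat (x - x')" y] by metis
qed

lemma walk_hy: "\<exists>n. walk (x, y) (x, y') n"
proof (cases "y \<le> y'")
  case True
  then have "y' = y + int (nat (y' - y))" by simp
  then show ?thesis using walk_y1[of x y "nat (y' - y)"] by metis
next
  case False
  then have "y = y' + int (nat (y - y'))" by simp
  then show ?thesis using walk_y2[of x y' "nat (y - y')"] by metis
qed

lemma walk_ex: "\<exists>n. walk u v n"
proof -
  obtain x y x' y' where u: "u = (x, y)" and v: "v = (x', y')" by (cases u, cases v) auto
  obtain n where "walk (x, y) (x', y) n" using walk_hx by blast
  moreover obtain k where "walk (x', y) (x', y') k" using walk_hy by blast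
  ultimately show ?thesis using walk_trans u v by blast
qed

lemma gdist_walk: "walk u v (gdist u v)"
  unfolding gdist_def using walk_ex by (rule LeastI_ex)

lemma gdist_adj: "grid_adj a b \<Longrightarrow> gdist a x \<le> gdist b x + 1"
proof -
  assume "grid_adj a b"
  then have "walk a x (Suc (gdist b x))" using gdist_walk walk_step by blast
  then show ?thesis unfolding gdist_def by (simp add: Least_le)
qed

lemma cons_sub:
  assumes "finite S" "{v. lam v \<noteq> 0} \<subseteq> S"
  shows "consistency lam x = (\<Sum>v\<in>S. gdist v x * lam v)"
  unfolding consistency_def
  by (rule sum.mono_neutral_left) (use assms in auto)

lemma min_iff:
  assumes "finite M" "m \<in> M"
  shows "(f m = Min (f ` M)) \<longleftrightarrow> (\<forall>x\<in>M. (f m :: nat) \<le> f x)"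
proof
  assume "f m = Min (f ` M)" then show "\<forall>x\<in>M. f m \<le> f x" using assms by simp
next
  assume "\<forall>x\<in>M. f m \<le> f x"
  then show "f m = Min (f ` M)"
  proof (intro antisym)
    show "f m \<le> Min (f ` M)" using assms \<open>\<forall>x\<in>M. f m \<le> f x\<close> by (subst Min_ge_iff) auto
    show "Min (f ` M) \<le> f m" using assms by (intro Min_le) auto
  qed
qed

theorem lemma1:
  fixes M :: "node set" and lam lam' :: "node \<Rightarrow> nat" and m a b :: node and j :: nat
  assumes "finite M" and "M \<noteq> {}"
    and "finite_config lam"
    and "m \<in> weber lam M"
    and "grid_adj a b"
    and "gdist b m + 1 = gdist a m"
    and "1 \<le> j" and "j \<le> lam a"
    and "lam' = lam(a := lam a - j, b := lam b + j)"
  shows "m \<in> weber lam' M \<and> weber lam' M \<subseteq> weber lam M"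
proof -
  have ab: "a \<noteq> b" using assms(5) by (auto simp: grid_adj_def)
  define S where "S = {v. lam v \<noteq> 0} \<union> {a, b}"
  have fS: "finite S" using assms(3) by (simp add: S_def finite_config_def)
  have s1: "{v. lam v \<noteq> 0} \<subseteq> S" by (auto simp: S_def)
  have s2: "{v. lam' v \<noteq> 0} \<subseteq> S" using assms(9) by (auto simp: S_def)
  define R where "R x = (\<Sum>v\<in>S - {a, b}. gdist v x * lam v)" for x
  have key: "consistency lam' x + j * gdist a x = consistency lam x + j * gdist b x" for x
  proof -
    have aS: "a \<in> S" and bS: "b \<in> S" by (auto simp: S_def)
    have split: "(\<Sum>v\<in>S. f v) = f a + f b + (\<Sum>v\<in>S - {a, b}. f v)" for f :: "node \<Rightarrow> nat"
    proof -
      have "(\<Sum>v\<in>S. f v) = f a + (\<Sum>v\<in>S - {a}. f v)" using fS aS by (simp add: sum.remove)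
      also have "(\<Sum>v\<in>S - {a}. f v) = f b + (\<Sum>v\<in>S - {a} - {b}. f v)"
        using fS bS ab by (intro sum.remove) auto
      finally show ?thesis by (simp add: Diff_insert2[symmetric] insert_commute)
    qed
    have e1: "consistency lam x = gdist a x * lam a + gdist b x * lam b + R x"
      using cons_sub[OF fS s1] split R_def by simp
    have "(\<Sum>v\<in>S - {a, b}. gdist v x * lam' v) = R x"
      unfolding R_def using assms(9) by (intro sum.cong) auto
    moreover have "lam' a = lam a - j" "lam' b = lam b + j" using assms(9) ab by auto
    moreover have "consistency lam' x = gdist a x * lam' a + gdist b x * lam' b + (\<Sum>v\<in>S - {a, b}. gdist v x * lam' v)"
      using cons_sub[OF fS s2, of x] split[of "\<lambda>v. gdist v x * lam' v"] by simp
    ultimately have e2: "consistency lam' x = gdist a x * (lam a - j) + gdist b x * (lam b + j) + R x"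
      by (simp only:)
    have "gdist a x * (lam a - j) + j * gdist a x = gdist a x * lam a"
    proof -
      obtain k where "lam a = k + j" using assms(8) le_Suc_ex by (metis add.commute)
      then show ?thesis by (simp add: algebra_simps)
    qed
    then show ?thesis using e1 e2 by (simp add: algebra_simps)
  qed
  have mM: "m \<in> M" using assms(4) by (simp add: weber_def)
  have mmin: "\<forall>x\<in>M. consistency lam m \<le> consistency lam x"
    using assms(4) min_iff[OF assms(1) mM, of "consistency lam"] by (simp add: weber_def)
  have km: "consistency lam' m + j = consistency lam m"
    using key[of m] assms(6)[symmetric] by (simp add: algebra_simps)
  have low: "consistency lam x \<le> consistency lam' x + j" for x
  proof -
    have "j * gdist a x \<le> j * gdist b x + j" using gdist_adj[OF assms(5), of x]
      by (metis mult.commute mult_Suc mult_le_mono2 add.commute plus_1_eq_Suc)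
    then show ?thesis using key[of x] by linarith
  qed
  have m': "\<forall>x\<in>M. consistency lam' m \<le> consistency lam' x"
    using mmin low km by (metis add_le_cancel_right order_trans)
  have part1: "m \<in> weber lam' M"
    using m' min_iff[OF assms(1) mM, of "consistency lam'"] mM by (simp add: weber_def)
  have part2: "weber lam' M \<subseteq> weber lam M"
  proof
    fix x assume "x \<in> weber lam' M"
    then have xM: "x \<in> M" and "consistency lam' x = consistency lam' m"
      using part1 by (auto simp: weber_def)
    then have "consistency lam x \<le> consistency lam m" using low[of x] km by simp
    then have "\<forall>y\<in>M. consistency lam x \<le> consistency lam y" using mmin by (meson order_trans)
    then show "x \<in> weber lam M"
      using min_iff[OF assms(1) xM, of "consistency lam"] xM by (simp add: weber_def)
  qed
  show ?thesis using part1 part2 by blast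
qed

end
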